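(* Let $D\in\mathbb{N}$ and $r\in\{1,\dots,D\}$. For $\mu>0$ let $Y_\mu\sim \mathrm{Pois}_\mu^{(r,D)}$, and let $U\sim\mathcal{N}_{0,1}^{(r,D)}$. Then $$\lim_{\mu\to\infty}\mathbb{D}[Y_\mu]=\operatorname{Var}(U).$$
   Context: For a parent distribution $f_\theta$ and integers $1\le r\le D$, the order statistic $Z^{(r,D)}$ is the $r$-th smallest of $Z_1,\dots,Z_D\overset{iid}{\sim}f_\theta$; its law is written $f_\theta^{(r,D)}$. $\mathrm{Pois}_\mu^{(r,D)}$ is the law of the $r$-th smallest of $D$ i.i.d. Poisson($\mu$) variables, and $\mathcal{N}_{0,1}^{(r,D)}$ is the law of the $r$-th smallest of $D$ i.i.d. standard normal variables. For a nonnegative random variable $Y$ with positive finite mean, the index of dispersion is $\mathbb{D}[Y]=\operatorname{Var}(Y)/\mathbb{E}[Y]$. *)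

theory Defs
  imports "HOL-Probability.Probability"
begin

definition rth_smallest :: "nat \<Rightarrow> nat \<Rightarrow> (nat \<Rightarrow> real) \<Rightarrow> real" where
  "rth_smallest D r z = sort (map z [0..<D]) ! (r - 1)"

definition order_stat :: "real measure \<Rightarrow> nat \<Rightarrow> nat \<Rightarrow> real measure" where
  "order_stat M D r = distr (PiM {..<D} (\<lambda>_. M)) borel (rth_smallest D r)"

definition pois_law :: "real \<Rightarrow> real measure" where
  "pois_law mu = distr (measure_pmf (poisson_pmf mu)) borel real"

definition std_normal_law :: "real measure" where
  "std_normal_law = density lborel std_normal_density"

definition mean_of :: "real measure \<Rightarrow> real" where
  "mean_of M = (\<integral>y. y \<partial>M)"

definition var_of :: "real measure \<Rightarrow> real" where
  "var_of M = (\<integral>y. (y - mean_of M)\<^sup>2 \<partial>M)"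

definition dispersion :: "real measure \<Rightarrow> real" where
  "dispersion M = var_of M / mean_of M"

end

theory Submission
  imports Defs
begin


lemma rth_cong: "(\<And>i. i < D \<Longrightarrow> z i = z' i) \<Longrightarrow> rth_smallest D r z = rth_smallest D r z'"
proof -
  assume h: "\<And>i. i < D \<Longrightarrow> z i = z' i"
  have "map z [0..<D] = map z' [0..<D]" by (rule map_cong) (auto simp: h)
  then show ?thesis unfolding rth_smallest_def by (rule arg_cong[where f="\<lambda>l. sort l ! (r - 1)"])
qed

lemma sorted_nth_le_iff:
  fixes L :: "real list"
  assumes "sorted L" "1 \<le> r" "r \<le> length L"
  shows "L ! (r - 1) \<le> x \<longleftrightarrow> r \<le> card {j. j < length L \<and> L ! j \<le> x}"
proof
  assume h: "L ! (r - 1) \<le> x"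
  have sub: "{..<r} \<subseteq> {j. j < length L \<and> L ! j \<le> x}"
  proof
    fix j assume "j \<in> {..<r}"
    then have j: "j \<le> r - 1" "j < length L" using assms by auto
    have "r - 1 < length L" using assms by linarith
    then have "L ! j \<le> L ! (r - 1)" by (rule sorted_nth_mono[OF assms(1) j(1)])
    then show "j \<in> {j. j < length L \<and> L ! j \<le> x}" using h j by auto
  qed
  have "card {..<r} \<le> card {j. j < length L \<and> L ! j \<le> x}" by (rule card_mono[OF _ sub]) simp
  then show "r \<le> card {j. j < length L \<and> L ! j \<le> x}" by simp
next
  assume h: "r \<le> card {j. j < length L \<and> L ! j \<le> x}"
  show "L ! (r - 1) \<le> x"
  proof (rule ccontr)
    assume nle: "\<not> L ! (r - 1) \<le> x"
    have sub: "{j. j < length L \<and> L ! j \<le> x} \<subseteq> {..<r - 1}"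
    proof
      fix j assume "j \<in> {j. j < length L \<and> L ! j \<le> x}"
      then have j: "j < length L" "L ! j \<le> x" by auto
      show "j \<in> {..<r-1}"
      proof (rule ccontr)
        assume "j \<notin> {..<r-1}"
        then have "r - 1 \<le> j" by auto
        then have "L ! (r-1) \<le> L ! j" by (rule sorted_nth_mono[OF assms(1) _ j(1)])
        then show False using j nle by linarith
      qed
    qed
    have "card {j. j < length L \<and> L ! j \<le> x} \<le> card {..<r - 1}" by (rule card_mono[OF _ sub]) simp
    then show False using h assms by simp
  qed
qed

lemma rth_le_iff:
  assumes "1 \<le> r" "r \<le> D"
  shows "rth_smallest D r z \<le> x \<longleftrightarrow> r \<le> card {i. i < D \<and> z i \<le> x}"
proof -
  let ?L = "sort (map z [0..<D])"
  have "rth_smallest D r z \<le> x \<longleftrightarrow> r \<le> card {j. j < length ?L \<and> ?L ! j \<le> x}"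
    unfolding rth_smallest_def using assms by (intro sorted_nth_le_iff) auto
  also have "card {j. j < length ?L \<and> ?L ! j \<le> x} = length (filter (\<lambda>v. v \<le> x) ?L)"
    by (simp add: length_filter_conv_card)
  also have "\<dots> = length (filter (\<lambda>v. v \<le> x) (map z [0..<D]))"
  proof -
    have "mset (filter (\<lambda>v. v \<le> x) ?L) = mset (filter (\<lambda>v. v \<le> x) (map z [0..<D]))"
      by (simp only: mset_filter mset_sort)
    then have "size (mset (filter (\<lambda>v. v \<le> x) ?L)) = size (mset (filter (\<lambda>v. v \<le> x) (map z [0..<D])))"
      by (rule arg_cong)
    then show ?thesis by (simp only: size_mset)
  qed
  also have "\<dots> = card {i. i < D \<and> map z [0..<D] ! i \<le> x}"
    by (simp add: length_filter_conv_card)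
  also have "{i. i < D \<and> map z [0..<D] ! i \<le> x} = {i. i < D \<and> z i \<le> x}"
    by auto
  finally show ?thesis .
qed

lemma rth_unique:
  assumes "1 \<le> r" "r \<le> D" "\<And>x. w \<le> x \<longleftrightarrow> r \<le> card {i. i < D \<and> z i \<le> x}"
  shows "rth_smallest D r z = w"
proof -
  have 1: "rth_smallest D r z \<le> w"
    using rth_le_iff[OF assms(1,2), of z w] assms(3)[of w] by simp
  have 2: "w \<le> rth_smallest D r z"
    using rth_le_iff[OF assms(1,2), of z "rth_smallest D r z"] assms(3)[of "rth_smallest D r z"] by simp
  from 1 2 show ?thesis by linarith
qed

lemma rth_affine:
  fixes a b :: real
  assumes "1 \<le> r" "r \<le> D" "b > 0"
  shows "rth_smallest D r (\<lambda>i. a + b * z i) = a + b * rth_smallest D r z"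
proof (rule rth_unique[OF assms(1,2)])
  fix x
  have "a + b * rth_smallest D r z \<le> x \<longleftrightarrow> rth_smallest D r z \<le> (x - a) / b"
    using assms(3) by (simp add: pos_le_divide_eq algebra_simps)
  also have "\<dots> \<longleftrightarrow> r \<le> card {i. i < D \<and> z i \<le> (x - a) / b}" by (rule rth_le_iff[OF assms(1,2)])
  also have "{i. i < D \<and> z i \<le> (x - a) / b} = {i. i < D \<and> a + b * z i \<le> x}"
    using assms(3) by (simp add: pos_le_divide_eq algebra_simps)
  finally show "a + b * rth_smallest D r z \<le> x \<longleftrightarrow> r \<le> card {i. i < D \<and> a + b * z i \<le> x}" .
qed

lemma rth_member:
  assumes "1 \<le> r" "r \<le> D"
  shows "\<exists>i<D. rth_smallest D r z = z i"
proof -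
  have "rth_smallest D r z \<in> set (sort (map z [0..<D]))"
    unfolding rth_smallest_def using assms by (intro nth_mem) auto
  then show ?thesis by auto
qed

lemma rth_sq_le:
  assumes "1 \<le> r" "r \<le> D"
  shows "(rth_smallest D r z)\<^sup>2 \<le> (\<Sum>i<D. (z i)\<^sup>2)"
proof -
  obtain i where i: "i < D" "rth_smallest D r z = z i" using rth_member[OF assms] by blast
  have "(z i)\<^sup>2 \<le> (\<Sum>i<D. (z i)\<^sup>2)" by (rule member_le_sum) (use i in auto)
  then show ?thesis using i by simp
qed

lemma rth_tendsto:
  fixes z :: "nat \<Rightarrow> nat \<Rightarrow> real"
  assumes "1 \<le> r" "r \<le> D" "\<And>i. i < D \<Longrightarrow> (\<lambda>n. z n i) \<longlonglongrightarrow> y i"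
  shows "(\<lambda>n. rth_smallest D r (z n)) \<longlonglongrightarrow> rth_smallest D r y"
proof (rule order_tendstoI)
  let ?w = "rth_smallest D r y"
  fix a assume "a > ?w"
  define a' where "a' = (a + ?w) / 2"
  have a': "?w < a'" "a' < a" using \<open>a > ?w\<close> unfolding a'_def by auto
  let ?S = "{i. i < D \<and> y i \<le> ?w}"
  have rS: "r \<le> card ?S" using rth_le_iff[OF assms(1,2), of y ?w] by simp
  have "\<forall>\<^sub>F n in sequentially. \<forall>i\<in>?S. z n i < a'"
  proof (intro eventually_ball_finite ballI)
    fix i assume i: "i \<in> ?S"
    then have "i < D" "y i < a'" using a' by auto
    then show "\<forall>\<^sub>F n in sequentially. z n i < a'"
      by (intro order_tendstoD(2)[OF assms(3)[of i]])
  qed simp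
  then show "\<forall>\<^sub>F n in sequentially. rth_smallest D r (z n) < a"
  proof (rule eventually_mono)
    fix n assume elim: "\<forall>i\<in>?S. z n i < a'"
    have sub: "?S \<subseteq> {i. i < D \<and> z n i \<le> a'}"
    proof (rule subsetI)
      fix i assume "i \<in> ?S"
      then have "i < D" "z n i < a'" using elim by auto
      then show "i \<in> {i. i < D \<and> z n i \<le> a'}" by simp
    qed
    have "card ?S \<le> card {i. i < D \<and> z n i \<le> a'}" by (rule card_mono[OF _ sub]) simp
    then have "r \<le> card {i. i < D \<and> z n i \<le> a'}" using rS by linarith
    then have "rth_smallest D r (z n) \<le> a'" using rth_le_iff[OF assms(1,2), of "z n" a'] by simp
    then show "rth_smallest D r (z n) < a" using a' by linarith
  qed
next
  let ?w = "rth_smallest D r y"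
  fix a assume "a < ?w"
  define a' where "a' = (a + ?w) / 2"
  have a': "a < a'" "a' < ?w" using \<open>a < ?w\<close> unfolding a'_def by auto
  let ?T = "{i. i < D \<and> y i \<le> a'}"
  have "\<not> ?w \<le> a'" using a' by linarith
  then have rT: "\<not> r \<le> card ?T" using rth_le_iff[OF assms(1,2), of y a'] by simp
  have "\<forall>\<^sub>F n in sequentially. \<forall>i\<in>{i. i < D \<and> a' < y i}. a < z n i"
  proof (intro eventually_ball_finite ballI)
    fix i assume "i \<in> {i. i < D \<and> a' < y i}"
    then have "i < D" "a < y i" using a' by auto
    then show "\<forall>\<^sub>F n in sequentially. a < z n i"
      by (intro order_tendstoD(1)[OF assms(3)[of i]])
  qed simp
  then show "\<forall>\<^sub>F n in sequentially. a < rth_smallest D r (z n)"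
  proof (rule eventually_mono)
    fix n assume elim: "\<forall>i\<in>{i. i < D \<and> a' < y i}. a < z n i"
    have sub: "{i. i < D \<and> z n i \<le> a} \<subseteq> ?T"
    proof (rule subsetI)
      fix i assume "i \<in> {i. i < D \<and> z n i \<le> a}"
      then have i: "i < D" "z n i \<le> a" by auto
      show "i \<in> ?T"
      proof (rule ccontr)
        assume "i \<notin> ?T"
        then have "a' < y i" using i by auto
        then have "a < z n i" using elim i by auto
        then show False using i by linarith
      qed
    qed
    have "card {i. i < D \<and> z n i \<le> a} \<le> card ?T" by (rule card_mono[OF _ sub]) simp
    then have "\<not> r \<le> card {i. i < D \<and> z n i \<le> a}" using rT by linarith
    then have "\<not> rth_smallest D r (z n) \<le> a" using rth_le_iff[OF assms(1,2), of "z n" a] by simp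
    then show "a < rth_smallest D r (z n)" by linarith
  qed
qed



lemma pmf_nat_integral:
  fixes p :: "nat pmf" and f :: "nat \<Rightarrow> 'b::{banach,second_countable_topology}"
  assumes "summable (\<lambda>k. norm (pmf p k *\<^sub>R f k))"
  shows "integrable (measure_pmf p) f" "integral\<^sup>L (measure_pmf p) f = (\<Sum>k. pmf p k *\<^sub>R f k)"
proof -
  have i: "integrable (count_space UNIV) (\<lambda>k. pmf p k *\<^sub>R f k)"
    using assms by (simp add: integrable_count_space_nat_iff)
  show "integrable (measure_pmf p) f" unfolding measure_pmf_eq_density
    using i by (subst integrable_density) auto
  show "integral\<^sup>L (measure_pmf p) f = (\<Sum>k. pmf p k *\<^sub>R f k)" unfolding measure_pmf_eq_density
    using i by (subst integral_density) (auto simp: integral_count_space_nat)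
qed

lemma pois_sums0:
  assumes "0 < mu"
  shows "(\<lambda>k. pmf (poisson_pmf mu) k) sums 1"
proof -
  have "(\<lambda>k. mu ^ k /\<^sub>R fact k) sums exp mu" by (rule exp_converges)
  then have "(\<lambda>k. mu ^ k /\<^sub>R fact k * exp (-mu)) sums (exp mu * exp (-mu))" by (rule sums_mult2)
  then show ?thesis using assms by (simp add: exp_minus field_simps)
qed

lemma pmf_pois_Suc:
  assumes "0 < mu"
  shows "pmf (poisson_pmf mu) (Suc k) * real (Suc k) = mu * pmf (poisson_pmf mu) k"
proof -
  have f: "fact (Suc k) = real (Suc k) * fact k" by (rule fact_Suc)
  have "real (Suc k) \<noteq> 0" by (simp del: of_nat_Suc)
  then show ?thesis using assms unfolding pmf_poisson[OF assms] f
    by (simp del: of_nat_Suc add: field_simps)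
qed

lemma pois_sums1:
  assumes "0 < mu"
  shows "(\<lambda>k. pmf (poisson_pmf mu) k * real k) sums mu"
proof -
  have "(\<lambda>k. mu * pmf (poisson_pmf mu) k) sums (mu * 1)" by (rule sums_mult[OF pois_sums0[OF assms]])
  moreover have "(\<lambda>k. pmf (poisson_pmf mu) (Suc k) * real (Suc k)) = (\<lambda>k. mu * pmf (poisson_pmf mu) k)"
    using pmf_pois_Suc[OF assms] by (auto simp: fun_eq_iff)
  ultimately have "(\<lambda>k. pmf (poisson_pmf mu) (Suc k) * real (Suc k)) sums mu" by simp
  then show ?thesis by (subst (asm) sums_Suc_iff) simp
qed

lemma pois_sums2:
  assumes "0 < mu"
  shows "(\<lambda>k. pmf (poisson_pmf mu) k * (real k)\<^sup>2) sums (mu\<^sup>2 + mu)"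
proof -
  have "(\<lambda>k. mu * (pmf (poisson_pmf mu) k * real k + pmf (poisson_pmf mu) k)) sums (mu * (mu + 1))"
    by (intro sums_mult sums_add pois_sums0 pois_sums1 assms)
  moreover have "(\<lambda>k. pmf (poisson_pmf mu) (Suc k) * (real (Suc k))\<^sup>2) = (\<lambda>k. mu * (pmf (poisson_pmf mu) k * real k + pmf (poisson_pmf mu) k))"
  proof
    fix k
    have "pmf (poisson_pmf mu) (Suc k) * (real (Suc k))\<^sup>2 = (pmf (poisson_pmf mu) (Suc k) * real (Suc k)) * real (Suc k)"
      by (simp add: power2_eq_square)
    also have "\<dots> = mu * (pmf (poisson_pmf mu) k * real k + pmf (poisson_pmf mu) k)"
      unfolding pmf_pois_Suc[OF assms] by (simp add: algebra_simps)
    finally show "pmf (poisson_pmf mu) (Suc k) * (real (Suc k))\<^sup>2 = mu * (pmf (poisson_pmf mu) k * real k + pmf (poisson_pmf mu) k)" .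
  qed
  ultimately have "(\<lambda>k. pmf (poisson_pmf mu) (Suc k) * (real (Suc k))\<^sup>2) sums (mu\<^sup>2 + mu)"
    by (simp add: algebra_simps power2_eq_square)
  then show ?thesis by (subst (asm) sums_Suc_iff) simp
qed

definition nu :: "real \<Rightarrow> real measure" where
  "nu mu = distr (measure_pmf (poisson_pmf mu)) borel (\<lambda>k. (real k - mu) / sqrt mu)"

lemma real_distribution_nu: "real_distribution (nu mu)"
  unfolding nu_def by (intro prob_space.real_distribution_distr[OF prob_space_measure_pmf]) simp

lemma nu_second_moment:
  assumes "0 < mu"
  shows "integrable (nu mu) (\<lambda>z. z\<^sup>2)" "(\<integral>z. z\<^sup>2 \<partial>nu mu) = 1"
proof -
  let ?p = "pmf (poisson_pmf mu)"
  have "(\<lambda>k. (?p k * (real k)\<^sup>2 - 2 * mu * (?p k * real k) + mu\<^sup>2 * ?p k) / mu)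
          sums ((mu\<^sup>2 + mu - 2 * mu * mu + mu\<^sup>2 * 1) / mu)"
    by (intro sums_divide sums_add sums_diff sums_mult pois_sums0 pois_sums1 pois_sums2 assms)
  moreover have "(mu\<^sup>2 + mu - 2 * mu * mu + mu\<^sup>2 * 1) / mu = 1" using assms by (simp add: field_simps power2_eq_square)
  moreover have "(\<lambda>k. (?p k * (real k)\<^sup>2 - 2 * mu * (?p k * real k) + mu\<^sup>2 * ?p k) / mu)
      = (\<lambda>k. ?p k *\<^sub>R ((real k - mu) / sqrt mu)\<^sup>2)"
    using assms by (auto simp: fun_eq_iff field_simps power2_eq_square)
  ultimately have s: "(\<lambda>k. ?p k *\<^sub>R ((real k - mu) / sqrt mu)\<^sup>2) sums 1" by simp
  have sn: "summable (\<lambda>k. norm (?p k *\<^sub>R ((real k - mu) / sqrt mu)\<^sup>2))"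
    using s by (simp add: sums_iff abs_mult)
  show "integrable (nu mu) (\<lambda>z. z\<^sup>2)" unfolding nu_def
    by (subst integrable_distr_eq) (auto intro: pmf_nat_integral(1)[OF sn])
  have "(\<integral>z. z\<^sup>2 \<partial>nu mu) = (\<integral>k. ((real k - mu) / sqrt mu)\<^sup>2 \<partial>measure_pmf (poisson_pmf mu))"
    unfolding nu_def by (subst integral_distr) auto
  also have "\<dots> = (\<Sum>k. ?p k *\<^sub>R ((real k - mu) / sqrt mu)\<^sup>2)" by (rule pmf_nat_integral(2)[OF sn])
  also have "\<dots> = 1" using s by (simp add: sums_iff)
  finally show "(\<integral>z. z\<^sup>2 \<partial>nu mu) = 1" .
qed

lemma char_nu:
  assumes "0 < mu"
  shows "char (nu mu) t = exp (complex_of_real mu * (iexp (t / sqrt mu) - 1 - \<i> * complex_of_real (t / sqrt mu)))"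
proof -
  let ?p = "pmf (poisson_pmf mu)"
  define s where "s = t / sqrt mu"
  define c where "c = complex_of_real (exp (-mu)) * exp (- (\<i> * complex_of_real (s * mu)))"
  have tm: "?p k *\<^sub>R iexp (t * ((real k - mu) / sqrt mu)) = c * ((complex_of_real mu * iexp s) ^ k /\<^sub>R fact k)" for k
  proof -
    have sq: "sqrt mu \<noteq> 0" using assms by simp
    have "t * ((real k - mu) / sqrt mu) = real k * s - s * mu"
      unfolding s_def using sq by (simp add: field_simps)
    then have ceq: "complex_of_real (t * ((real k - mu) / sqrt mu)) = of_nat k * complex_of_real s - complex_of_real (s * mu)"
      by simp
    have e1: "\<i> * complex_of_real (t * ((real k - mu) / sqrt mu)) = of_nat k * (\<i> * complex_of_real s) + (- (\<i> * complex_of_real (s * mu)))"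
      unfolding ceq by (simp add: algebra_simps)
    have "iexp (t * ((real k - mu) / sqrt mu)) = exp (of_nat k * (\<i> * complex_of_real s)) * exp (- (\<i> * complex_of_real (s * mu)))"
      by (simp only: e1 exp_add)
    also have "\<dots> = iexp s ^ k * exp (- (\<i> * complex_of_real (s * mu)))"
      by (simp add: exp_of_nat_mult)
    finally show ?thesis using assms
      by (simp add: c_def scaleR_conv_of_real power_mult_distrib field_simps)
  qed
  have "(\<lambda>k. (complex_of_real mu * iexp s) ^ k /\<^sub>R fact k) sums exp (complex_of_real mu * iexp s)"
    by (rule exp_converges)
  then have ssum: "(\<lambda>k. c * ((complex_of_real mu * iexp s) ^ k /\<^sub>R fact k)) sums (c * exp (complex_of_real mu * iexp s))"
    by (rule sums_mult)
  have sn: "summable (\<lambda>k. norm (?p k *\<^sub>R iexp (t * ((real k - mu) / sqrt mu))))"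
  proof -
    have "norm (?p k *\<^sub>R iexp (t * ((real k - mu) / sqrt mu))) = ?p k" for k
      by (simp add: norm_mult)
    then show ?thesis using pois_sums0[OF assms] by (simp add: sums_iff)
  qed
  have "char (nu mu) t = (\<integral>k. iexp (t * ((real k - mu) / sqrt mu)) \<partial>measure_pmf (poisson_pmf mu))"
    unfolding char_def nu_def by (subst integral_distr) auto
  also have "\<dots> = (\<Sum>k. ?p k *\<^sub>R iexp (t * ((real k - mu) / sqrt mu)))"
    by (rule pmf_nat_integral(2)[OF sn])
  also have "\<dots> = c * exp (complex_of_real mu * iexp s)"
    unfolding tm using ssum by (simp add: sums_iff)
  also have "\<dots> = exp (complex_of_real mu * (iexp s - 1 - \<i> * complex_of_real s))"
    unfolding c_def by (simp add: exp_of_real[symmetric] exp_add[symmetric] exp_minus[symmetric] algebra_simps)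
  finally show ?thesis unfolding s_def .
qed



lemma gen_dct:
  fixes f g :: "nat \<Rightarrow> 'a \<Rightarrow> real"
  assumes [measurable]: "\<And>n. f n \<in> borel_measurable M" "\<And>n. g n \<in> borel_measurable M"
    "F \<in> borel_measurable M" "G \<in> borel_measurable M"
  assumes intg: "\<And>n. integrable M (g n)" "integrable M G"
  assumes bnd: "\<And>n x. x \<in> space M \<Longrightarrow> \<bar>f n x\<bar> \<le> g n x"
  assumes convf: "\<And>x. x \<in> space M \<Longrightarrow> (\<lambda>n. f n x) \<longlonglongrightarrow> F x"
  assumes convg: "\<And>x. x \<in> space M \<Longrightarrow> (\<lambda>n. g n x) \<longlonglongrightarrow> G x"
  assumes convI: "(\<lambda>n. integral\<^sup>L M (g n)) \<longlonglongrightarrow> integral\<^sup>L M G"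
  shows "(\<lambda>n. integral\<^sup>L M (f n)) \<longlonglongrightarrow> integral\<^sup>L M F"
proof -
  have FG: "\<bar>F x\<bar> \<le> G x" if x: "x \<in> space M" for x
    by (rule tendsto_le[OF sequentially_bot convg[OF x] tendsto_rabs[OF convf[OF x]]])
      (use bnd[OF x] in auto)
  have intf: "integrable M (f n)" for n
    by (rule Bochner_Integration.integrable_bound[OF intg(1)[of n]]) (auto intro!: AE_I2 simp: bnd order_trans[OF bnd])
  have intF: "integrable M F"
    by (rule Bochner_Integration.integrable_bound[OF intg(2)]) (auto intro!: AE_I2 simp: FG order_trans[OF FG])
  have d1: "(\<lambda>n. \<integral>x. max 0 (G x - g n x) \<partial>M) \<longlonglongrightarrow> (\<integral>x. 0 \<partial>M)"
  proof (rule integral_dominated_convergence[where w=G])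
    show "AE x in M. (\<lambda>n. max 0 (G x - g n x)) \<longlonglongrightarrow> 0"
    proof (rule AE_I2)
      fix x assume x: "x \<in> space M"
      have "(\<lambda>n. max 0 (G x - g n x)) \<longlonglongrightarrow> max 0 (G x - G x)"
        by (intro tendsto_intros convg[OF x])
      then show "(\<lambda>n. max 0 (G x - g n x)) \<longlonglongrightarrow> 0" by simp
    qed
    show "AE x in M. norm (max 0 (G x - g n x)) \<le> G x" for n
    proof (rule AE_I2)
      fix x assume x: "x \<in> space M"
      have "0 \<le> g n x" using bnd[OF x, of n] by linarith
      moreover have "0 \<le> G x" using FG[OF x] by linarith
      ultimately show "norm (max 0 (G x - g n x)) \<le> G x" by auto
    qed
  qed (auto simp: intg)
  have eqabs: "(\<integral>x. \<bar>g n x - G x\<bar> \<partial>M) = (integral\<^sup>L M (g n) - integral\<^sup>L M G) + 2 * (\<integral>x. max 0 (G x - g n x) \<partial>M)" for n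
  proof -
    have "(\<integral>x. \<bar>g n x - G x\<bar> \<partial>M) = (\<integral>x. (g n x - G x) + 2 * max 0 (G x - g n x) \<partial>M)"
      by (intro Bochner_Integration.integral_cong) (auto simp: abs_if max_def)
    also have "\<dots> = (\<integral>x. g n x - G x \<partial>M) + (\<integral>x. 2 * max 0 (G x - g n x) \<partial>M)"
      using intg by (intro Bochner_Integration.integral_add) auto
    also have "\<dots> = (integral\<^sup>L M (g n) - integral\<^sup>L M G) + 2 * (\<integral>x. max 0 (G x - g n x) \<partial>M)"
      using intg by (simp add: Bochner_Integration.integral_diff)
    finally show ?thesis .
  qed
  have L1: "(\<lambda>n. \<integral>x. \<bar>g n x - G x\<bar> \<partial>M) \<longlonglongrightarrow> 0"
  proof -
    have "(\<lambda>n. (integral\<^sup>L M (g n) - integral\<^sup>L M G) + 2 * (\<integral>x. max 0 (G x - g n x) \<partial>M))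
        \<longlonglongrightarrow> (integral\<^sup>L M G - integral\<^sup>L M G) + 2 * 0"
      using d1 by (intro tendsto_intros convI) auto
    then show ?thesis unfolding eqabs by simp
  qed
  define h where "h n x = max (- G x) (min (G x) (f n x))" for n x
  have hm[measurable]: "h n \<in> borel_measurable M" for n
    unfolding h_def by measurable
  have hbnd: "\<bar>h n x\<bar> \<le> G x" if x: "x \<in> space M" for n x
  proof -
    have "0 \<le> G x" using FG[OF x] by linarith
    then show ?thesis unfolding h_def by auto
  qed
  have h_conv: "(\<lambda>n. integral\<^sup>L M (h n)) \<longlonglongrightarrow> integral\<^sup>L M F"
  proof (rule integral_dominated_convergence[where w=G])
    show "AE x in M. (\<lambda>n. h n x) \<longlonglongrightarrow> F x"
    proof (rule AE_I2)
      fix x assume x: "x \<in> space M"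
      have "(\<lambda>n. h n x) \<longlonglongrightarrow> max (- G x) (min (G x) (F x))"
        unfolding h_def by (intro tendsto_intros convf[OF x])
      also have "max (- G x) (min (G x) (F x)) = F x" using FG[OF x] by auto
      finally show "(\<lambda>n. h n x) \<longlonglongrightarrow> F x" .
    qed
    show "AE x in M. norm (h n x) \<le> G x" for n
      by (rule AE_I2) (use hbnd in auto)
  qed (auto simp: intg)
  have inth: "integrable M (h n)" for n
    by (rule Bochner_Integration.integrable_bound[OF intg(2)]) (auto intro!: AE_I2 intro: order_trans[OF hbnd])
  have diff_bnd: "norm (integral\<^sup>L M (f n) - integral\<^sup>L M (h n)) \<le> (\<integral>x. \<bar>g n x - G x\<bar> \<partial>M)" for n
  proof -
    have "norm (integral\<^sup>L M (f n) - integral\<^sup>L M (h n)) = norm (\<integral>x. f n x - h n x \<partial>M)"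
      using intf inth by (simp add: Bochner_Integration.integral_diff)
    also have "\<dots> \<le> (\<integral>x. norm (f n x - h n x) \<partial>M)" by (rule integral_norm_bound)
    also have "\<dots> \<le> (\<integral>x. \<bar>g n x - G x\<bar> \<partial>M)"
    proof (rule Bochner_Integration.integral_mono)
      show "integrable M (\<lambda>x. norm (f n x - h n x))" using intf inth by auto
      show "integrable M (\<lambda>x. \<bar>g n x - G x\<bar>)" using intg by auto
      fix x assume x: "x \<in> space M"
      show "norm (f n x - h n x) \<le> \<bar>g n x - G x\<bar>"
        using bnd[OF x, of n] FG[OF x] unfolding h_def by auto
    qed
    finally show ?thesis .
  qed
  have "(\<lambda>n. integral\<^sup>L M (f n) - integral\<^sup>L M (h n)) \<longlonglongrightarrow> 0"
    by (rule Lim_null_comparison[OF always_eventually L1]) (use diff_bnd in auto)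
  then have "(\<lambda>n. (integral\<^sup>L M (f n) - integral\<^sup>L M (h n)) + integral\<^sup>L M (h n)) \<longlonglongrightarrow> 0 + integral\<^sup>L M F"
    by (intro tendsto_add h_conv)
  then show ?thesis by simp
qed



lemma card_as_sum: "real (card {i. i < (D::nat) \<and> P i}) = (\<Sum>i<D. if P i then 1 else 0)"
proof -
  have "(\<Sum>i<D. if P i then 1 else (0::real)) = (\<Sum>i\<in>{i\<in>{..<D}. P i}. 1)"
    using sum.inter_filter[of "{..<D}" "\<lambda>_. 1::real" P] by simp
  also have "{i\<in>{..<D}. P i} = {i. i < D \<and> P i}" by auto
  finally show ?thesis by simp
qed

lemma rth_measurable:
  assumes "1 \<le> r" "r \<le> D"
  shows "rth_smallest D r \<in> borel_measurable (PiM {..<D} (\<lambda>_. borel))"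
  unfolding borel_measurable_iff_le
proof
  fix a :: real
  have "{w \<in> space (PiM {..<D} (\<lambda>_. borel)). rth_smallest D r w \<le> a}
      = {w \<in> space (PiM {..<D} (\<lambda>_. borel)). real r \<le> (\<Sum>i<D. if w i \<le> a then 1 else 0)}"
  proof (intro Collect_cong conj_cong refl)
    fix w :: "nat \<Rightarrow> real"
    have eq: "r \<le> card {i. i < D \<and> w i \<le> a} \<longleftrightarrow> real r \<le> (\<Sum>i<D. if w i \<le> a then 1 else 0)"
      by (subst card_as_sum[symmetric]) (rule of_nat_le_iff[symmetric])
    show "rth_smallest D r w \<le> a \<longleftrightarrow> real r \<le> (\<Sum>i<D. if w i \<le> a then 1 else 0)"
      by (simp only: rth_le_iff[OF assms] eq)
  qed
  also have "\<dots> \<in> sets (PiM {..<D} (\<lambda>_. borel))" by measurable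
  finally show "{w \<in> space (PiM {..<D} (\<lambda>_. borel)). rth_smallest D r w \<le> a} \<in> sets (PiM {..<D} (\<lambda>_. borel))" .
qed

lemma rth_measurable':
  assumes "1 \<le> r" "r \<le> D" "sets N = sets borel"
  shows "rth_smallest D r \<in> borel_measurable (PiM {..<D} (\<lambda>_. N))"
proof -
  have "sets (PiM {..<D} (\<lambda>_. N)) = sets (PiM {..<D} (\<lambda>_. borel))"
    using assms(3) by (intro sets_PiM_cong) auto
  then have eqm: "measurable (PiM {..<D} (\<lambda>_. N)) borel = measurable (PiM {..<D} (\<lambda>_. borel)) borel"
    by (rule measurable_cong_sets) simp
  show ?thesis by (subst eqm) (rule rth_measurable[OF assms(1,2)])
qed

lemma compose_measurable:
  assumes "A \<in> measurable \<Omega> N"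
  shows "compose {..<D} A \<in> measurable (PiM {..<D} (\<lambda>_. \<Omega>)) (PiM {..<D} (\<lambda>_. N))"
  unfolding compose_def
proof (rule measurable_restrict)
  fix i assume i: "i \<in> {..<D}"
  show "(\<lambda>\<omega>. A (\<omega> i)) \<in> measurable (PiM {..<D} (\<lambda>_. \<Omega>)) N"
    by (rule measurable_compose[OF measurable_component_singleton[OF i] assms])
qed

lemma rth_comp_measurable:
  assumes [measurable]: "A \<in> borel_measurable \<Omega>" and r: "1 \<le> r" "r \<le> D"
  shows "(\<lambda>\<omega>. rth_smallest D r (\<lambda>i. A (\<omega> i))) \<in> borel_measurable (PiM {..<D} (\<lambda>_. \<Omega>))"
proof -
  have mc: "compose {..<D} A \<in> measurable (PiM {..<D} (\<lambda>_. \<Omega>)) (PiM {..<D} (\<lambda>_. borel))"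
    by (rule compose_measurable) simp
  have "(\<lambda>\<omega>. rth_smallest D r (compose {..<D} A \<omega>)) \<in> borel_measurable (PiM {..<D} (\<lambda>_. \<Omega>))"
    using measurable_comp[OF mc rth_measurable[OF r]] by (simp add: comp_def)
  moreover have "rth_smallest D r (compose {..<D} A \<omega>) = rth_smallest D r (\<lambda>i. A (\<omega> i))" for \<omega>
    by (auto simp: compose_def intro!: rth_cong)
  ultimately show ?thesis by simp
qed

lemma order_stat_repr:
  assumes P: "prob_space \<Omega>" and A[measurable]: "A \<in> borel_measurable \<Omega>" and r: "1 \<le> r" "r \<le> D"
  shows "order_stat (distr \<Omega> borel A) D r
     = distr (PiM {..<D} (\<lambda>_. \<Omega>)) borel (\<lambda>\<omega>. rth_smallest D r (\<lambda>i. A (\<omega> i)))"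
proof -
  let ?Q = "distr \<Omega> borel A"
  have pQ: "prob_space ?Q" using P by (simp add: prob_space.prob_space_distr)
  have "measurable \<Omega> ?Q = measurable \<Omega> borel" by (rule measurable_cong_sets) auto
  then have AQ: "A \<in> measurable \<Omega> ?Q" by simp
  have "distr (PiM {..<D} (\<lambda>_. \<Omega>)) (PiM {..<D} (\<lambda>_. ?Q)) (compose {..<D} A)
      = PiM {..<D} (\<lambda>_. distr \<Omega> ?Q A)"
    by (rule distr_PiM_finite_prob_space') (use P pQ AQ in auto)
  also have "distr \<Omega> ?Q A = ?Q" by (intro distr_cong) auto
  finally have eq: "PiM {..<D} (\<lambda>_. ?Q) = distr (PiM {..<D} (\<lambda>_. \<Omega>)) (PiM {..<D} (\<lambda>_. ?Q)) (compose {..<D} A)" ..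
  have mc: "compose {..<D} A \<in> measurable (PiM {..<D} (\<lambda>_. \<Omega>)) (PiM {..<D} (\<lambda>_. ?Q))"
    by (rule compose_measurable[OF AQ])
  have mr: "rth_smallest D r \<in> borel_measurable (PiM {..<D} (\<lambda>_. ?Q))"
    by (rule rth_measurable'[OF r]) simp
  have "order_stat ?Q D r = distr (PiM {..<D} (\<lambda>_. \<Omega>)) borel (rth_smallest D r \<circ> compose {..<D} A)"
    unfolding order_stat_def by (subst eq) (rule distr_distr[OF mr mc])
  also have "\<dots> = distr (PiM {..<D} (\<lambda>_. \<Omega>)) borel (\<lambda>\<omega>. rth_smallest D r (\<lambda>i. A (\<omega> i)))"
    by (intro distr_cong refl) (auto simp: compose_def intro!: rth_cong)
  finally show ?thesis .
qed

lemma abs_le_1_sq: "\<bar>x::real\<bar> \<le> 1 + x\<^sup>2"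
proof (cases "\<bar>x\<bar> \<le> 1")
  case True
  then show ?thesis using zero_le_power2[of x] by linarith
next
  case False
  have "\<bar>x\<bar> * 1 \<le> \<bar>x\<bar> * \<bar>x\<bar>" by (rule mult_left_mono) (use False in auto)
  then have "\<bar>x\<bar> \<le> x\<^sup>2" by (simp add: power2_eq_square)
  then show ?thesis by linarith
qed

lemma moments_affine:
  fixes V :: "'a \<Rightarrow> real"
  assumes "prob_space P" and [measurable]: "V \<in> borel_measurable P" and sq: "integrable P (\<lambda>\<omega>. (V \<omega>)\<^sup>2)"
  shows "integrable P V"
    "mean_of (distr P borel (\<lambda>\<omega>. a + b * V \<omega>)) = a + b * (\<integral>\<omega>. V \<omega> \<partial>P)"
    "var_of (distr P borel (\<lambda>\<omega>. a + b * V \<omega>)) = b\<^sup>2 * ((\<integral>\<omega>. (V \<omega>)\<^sup>2 \<partial>P) - (\<integral>\<omega>. V \<omega> \<partial>P)\<^sup>2)"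
proof -
  interpret prob_space P by fact
  show iV: "integrable P V"
  proof (rule Bochner_Integration.integrable_bound[where f="\<lambda>\<omega>. 1 + (V \<omega>)\<^sup>2"])
    show "integrable P (\<lambda>\<omega>. 1 + (V \<omega>)\<^sup>2)" using sq by auto
    show "AE x in P. norm (V x) \<le> norm (1 + (V x)\<^sup>2)"
    proof (rule AE_I2)
      fix x
      have "\<bar>V x\<bar> \<le> 1 + (V x)\<^sup>2" by (rule abs_le_1_sq)
      then show "norm (V x) \<le> norm (1 + (V x)\<^sup>2)" by simp
    qed
  qed simp
  define m where "m = (\<integral>\<omega>. V \<omega> \<partial>P)"
  show mean: "mean_of (distr P borel (\<lambda>\<omega>. a + b * V \<omega>)) = a + b * m"
    unfolding mean_of_def m_def using iV by (subst integral_distr) (auto simp: prob_space)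
  have "var_of (distr P borel (\<lambda>\<omega>. a + b * V \<omega>)) = (\<integral>\<omega>. (a + b * V \<omega> - (a + b * m))\<^sup>2 \<partial>P)"
    unfolding var_of_def mean by (subst integral_distr) auto
  also have "\<dots> = (\<integral>\<omega>. b\<^sup>2 * (V \<omega>)\<^sup>2 + (- 2 * b\<^sup>2 * m) * V \<omega> + b\<^sup>2 * m\<^sup>2 \<partial>P)"
    by (intro Bochner_Integration.integral_cong) (auto simp: power2_eq_square algebra_simps)
  also have "\<dots> = b\<^sup>2 * (\<integral>\<omega>. (V \<omega>)\<^sup>2 \<partial>P) + (- 2 * b\<^sup>2 * m) * m + b\<^sup>2 * m\<^sup>2"
    using sq iV by (simp add: m_def prob_space)
  also have "\<dots> = b\<^sup>2 * ((\<integral>\<omega>. (V \<omega>)\<^sup>2 \<partial>P) - m\<^sup>2)" by (simp add: power2_eq_square algebra_simps)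
  finally show "var_of (distr P borel (\<lambda>\<omega>. a + b * V \<omega>)) = b\<^sup>2 * ((\<integral>\<omega>. (V \<omega>)\<^sup>2 \<partial>P) - (\<integral>\<omega>. V \<omega> \<partial>P)\<^sup>2)"
    unfolding m_def .
qed

lemma pois_repr:
  assumes mu: "0 < mu" and [measurable]: "Ys \<in> borel_measurable \<Omega>" and d: "distr \<Omega> borel Ys = nu mu"
  shows "pois_law mu = distr \<Omega> borel (\<lambda>x. mu + sqrt mu * Ys x)"
proof -
  have "distr \<Omega> borel (\<lambda>x. mu + sqrt mu * Ys x) = distr (distr \<Omega> borel Ys) borel (\<lambda>z. mu + sqrt mu * z)"
    by (subst distr_distr) (auto simp: comp_def)
  also have "\<dots> = distr (measure_pmf (poisson_pmf mu)) borel ((\<lambda>z. mu + sqrt mu * z) \<circ> (\<lambda>k. (real k - mu) / sqrt mu))"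
    unfolding d nu_def by (subst distr_distr) auto
  also have "\<dots> = pois_law mu" unfolding pois_law_def
    using mu by (intro distr_cong) (auto simp: comp_def)
  finally show ?thesis ..
qed

lemma comp_integral:
  fixes h :: "'a \<Rightarrow> real"
  assumes P: "prob_space \<Omega>" and i: "i < D" and [measurable]: "h \<in> borel_measurable \<Omega>"
  shows "integrable (PiM {..<D} (\<lambda>_. \<Omega>)) (\<lambda>\<omega>. h (\<omega> i)) \<longleftrightarrow> integrable \<Omega> h"
    "(\<integral>\<omega>. h (\<omega> i) \<partial>PiM {..<D} (\<lambda>_. \<Omega>)) = (\<integral>x. h x \<partial>\<Omega>)"
proof -
  have d: "distr (PiM {..<D} (\<lambda>_. \<Omega>)) \<Omega> (\<lambda>\<omega>. \<omega> i) = \<Omega>"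
    by (rule distr_PiM_component) (use P i in auto)
  have m: "(\<lambda>\<omega>. \<omega> i) \<in> measurable (PiM {..<D} (\<lambda>_. \<Omega>)) \<Omega>"
    using i by simp
  show "integrable (PiM {..<D} (\<lambda>_. \<Omega>)) (\<lambda>\<omega>. h (\<omega> i)) \<longleftrightarrow> integrable \<Omega> h"
    using integrable_distr_eq[OF m, of h] unfolding d by simp
  show "(\<integral>\<omega>. h (\<omega> i) \<partial>PiM {..<D} (\<lambda>_. \<Omega>)) = (\<integral>x. h x \<partial>\<Omega>)"
    using integral_distr[OF m, of h] unfolding d by simp
qed



lemma std_normal_sq:
  "integrable std_normal_distribution (\<lambda>x. x\<^sup>2)" "(\<integral>x. x\<^sup>2 \<partial>std_normal_distribution) = 1"
proof -
  show "integrable std_normal_distribution (\<lambda>x. x\<^sup>2)" by (rule integrable_std_normal_distribution_moment)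
  have "(\<integral>x. x\<^sup>2 \<partial>std_normal_distribution) = (\<integral>x. std_normal_density x * x ^ (2 * 1) \<partial>lborel)"
    by (subst integral_density) (auto simp: normal_density_nonneg)
  also have "\<dots> = 1" by (subst integral_std_normal_moment_even) (simp add: eval_nat_numeral)
  finally show "(\<integral>x. x\<^sup>2 \<partial>std_normal_distribution) = 1" .
qed

lemma char_conv:
  fixes mu :: "nat \<Rightarrow> real"
  assumes mu1: "\<And>n. 1 \<le> mu n" and mulim: "filterlim mu at_top sequentially"
  shows "(\<lambda>n. char (nu (mu n)) t) \<longlonglongrightarrow> char std_normal_distribution t"
proof -
  have mupos: "0 < mu n" for n using mu1[of n] by linarith
  define s where "s n = t / sqrt (mu n)" for n
  have sqrt_lim: "filterlim (\<lambda>n. sqrt (mu n)) at_top sequentially"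
    by (rule filterlim_compose[OF sqrt_at_top mulim])
  have bnd0: "(\<lambda>n. \<bar>t\<bar> ^ 3 / 6 / sqrt (mu n)) \<longlonglongrightarrow> 0"
    by (rule tendsto_divide_0[OF tendsto_const filterlim_at_top_imp_at_infinity[OF sqrt_lim]])
  have "(\<lambda>n. complex_of_real (mu n) * (iexp (s n) - 1 - \<i> * complex_of_real (s n)) - complex_of_real (- (t\<^sup>2) / 2)) \<longlonglongrightarrow> 0"
  proof (rule Lim_null_comparison[OF always_eventually bnd0], rule allI)
    fix n
    have sq: "sqrt (mu n) > 0" using mupos[of n] by simp
    have mus: "mu n * (s n)\<^sup>2 = t\<^sup>2"
      using sq mupos[of n] by (simp add: s_def power_divide)
    have musc: "complex_of_real (mu n) * (complex_of_real (s n))\<^sup>2 = complex_of_real (t\<^sup>2)"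
      by (metis mus of_real_mult of_real_power)
    have sum2: "(\<Sum>k\<le>2. (\<i> * complex_of_real (s n)) ^ k / fact k) = 1 + \<i> * complex_of_real (s n) - (complex_of_real (s n))\<^sup>2 / 2"
      by (simp add: eval_nat_numeral power2_eq_square algebra_simps)
    have e: "complex_of_real (mu n) * (iexp (s n) - 1 - \<i> * complex_of_real (s n)) - complex_of_real (- (t\<^sup>2) / 2)
        = complex_of_real (mu n) * (iexp (s n) - (\<Sum>k\<le>2. (\<i> * complex_of_real (s n)) ^ k / fact k))"
      unfolding sum2 using musc by (simp add: algebra_simps)
    have "norm (complex_of_real (mu n) * (iexp (s n) - 1 - \<i> * complex_of_real (s n)) - complex_of_real (- (t\<^sup>2) / 2))
        = mu n * norm (iexp (s n) - (\<Sum>k\<le>2. (\<i> * complex_of_real (s n)) ^ k / fact k))"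
      unfolding e using mupos[of n] by (simp add: norm_mult)
    also have "\<dots> \<le> mu n * (\<bar>s n\<bar> ^ 3 / 6)"
    proof (rule mult_left_mono)
      have f3: "fact (Suc 2) = (6::real)" by (simp add: eval_nat_numeral)
      show "norm (iexp (s n) - (\<Sum>k\<le>2. (\<i> * complex_of_real (s n)) ^ k / fact k)) \<le> \<bar>s n\<bar> ^ 3 / 6"
        using iexp_approx1[of "s n" 2] unfolding f3 by (simp add: eval_nat_numeral)
    qed (use mupos[of n] in simp)
    also have "mu n * (\<bar>s n\<bar> ^ 3 / 6) = \<bar>t\<bar> ^ 3 / 6 / sqrt (mu n)"
    proof -
      have c: "sqrt (mu n) ^ 3 = mu n * sqrt (mu n)"
        using mupos[of n] by (simp add: power3_eq_cube)
      show ?thesis unfolding s_def abs_divide power_divide c using sq mupos[of n]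
        by (simp add: field_simps c)
    qed
    finally show "norm (complex_of_real (mu n) * (iexp (s n) - 1 - \<i> * complex_of_real (s n)) - complex_of_real (- (t\<^sup>2) / 2))
        \<le> \<bar>t\<bar> ^ 3 / 6 / sqrt (mu n)" .
  qed
  then have "(\<lambda>n. (complex_of_real (mu n) * (iexp (s n) - 1 - \<i> * complex_of_real (s n)) - complex_of_real (- (t\<^sup>2) / 2)) + complex_of_real (- (t\<^sup>2) / 2))
      \<longlonglongrightarrow> 0 + complex_of_real (- (t\<^sup>2) / 2)"
    by (intro tendsto_add tendsto_const)
  then have "(\<lambda>n. complex_of_real (mu n) * (iexp (s n) - 1 - \<i> * complex_of_real (s n))) \<longlonglongrightarrow> complex_of_real (- (t\<^sup>2) / 2)"
    by simp
  then have "(\<lambda>n. exp (complex_of_real (mu n) * (iexp (s n) - 1 - \<i> * complex_of_real (s n)))) \<longlonglongrightarrow> exp (complex_of_real (- (t\<^sup>2) / 2))"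
    by (rule tendsto_exp)
  moreover have "char (nu (mu n)) t = exp (complex_of_real (mu n) * (iexp (s n) - 1 - \<i> * complex_of_real (s n)))" for n
    unfolding s_def by (rule char_nu[OF mupos])
  moreover have "char std_normal_distribution t = exp (complex_of_real (- (t\<^sup>2) / 2))"
  proof -
    have "char std_normal_distribution t = complex_of_real (exp (- (t\<^sup>2) / 2))"
      by (simp only: char_std_normal_distribution)
    also have "\<dots> = exp (complex_of_real (- (t\<^sup>2) / 2))" by (rule exp_of_real[symmetric])
    finally show ?thesis .
  qed
  ultimately show ?thesis by simp
qed

lemma key:
  fixes mu :: "nat \<Rightarrow> real"
  assumes r: "1 \<le> r" "r \<le> D" and mu1: "\<And>n. 1 \<le> mu n" and mulim: "filterlim mu at_top sequentially"
  shows "(\<lambda>n. dispersion (order_stat (pois_law (mu n)) D r)) \<longlonglongrightarrow> var_of (order_stat std_normal_law D r)"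
proof -
  have mupos: "0 < mu n" for n using mu1[of n] by linarith
  have weak: "weak_conv_m (\<lambda>n. nu (mu n)) std_normal_distribution"
    by (rule levy_continuity[OF real_distribution_nu real_dist_normal_dist char_conv[OF mu1 mulim]])
  obtain \<Omega> :: "real measure" and Ys :: "nat \<Rightarrow> real \<Rightarrow> real" and Y :: "real \<Rightarrow> real"
    where \<Omega>: "prob_space \<Omega>" and Ysm: "\<And>n. Ys n \<in> measurable \<Omega> borel"
      and Ysd: "\<And>n. distr \<Omega> borel (Ys n) = nu (mu n)" and Ym: "Y \<in> measurable \<Omega> lborel"
      and Yd: "distr \<Omega> borel Y = std_normal_distribution"
      and conv: "\<And>x. x \<in> space \<Omega> \<Longrightarrow> (\<lambda>n. Ys n x) \<longlonglongrightarrow> Y x"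
    using Skorohod[OF real_distribution_nu real_dist_normal_dist weak] by blast
  have Ymb[measurable]: "Y \<in> borel_measurable \<Omega>" using Ym measurable_cong_sets[OF refl sets_lborel, of \<Omega>] by simp
  have Ysmb[measurable]: "Ys n \<in> borel_measurable \<Omega>" for n using Ysm by simp
  define P where "P = PiM {..<D} (\<lambda>_. \<Omega>)"
  have P: "prob_space P" unfolding P_def by (intro prob_space_PiM \<Omega>)
  interpret P: prob_space P by (rule P)
  define W where "W n \<omega> = rth_smallest D r (\<lambda>i. Ys n (\<omega> i))" for n \<omega>
  define V where "V \<omega> = rth_smallest D r (\<lambda>i. Y (\<omega> i))" for \<omega>
  define G where "G n \<omega> = 1 + (\<Sum>i<D. (Ys n (\<omega> i))\<^sup>2)" for n \<omega>
  define GG where "GG \<omega> = 1 + (\<Sum>i<D. (Y (\<omega> i))\<^sup>2)" for \<omega>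
  have Wm[measurable]: "W n \<in> borel_measurable P" for n
    unfolding W_def P_def by (rule rth_comp_measurable[OF Ysmb r])
  have Vm[measurable]: "V \<in> borel_measurable P"
    unfolding V_def P_def by (rule rth_comp_measurable[OF Ymb r])
  have compm: "(\<lambda>\<omega>. h (\<omega> i)) \<in> borel_measurable P" if "h \<in> borel_measurable \<Omega>" "i < D" for h i
  proof -
    have iD: "i \<in> {..<D}" using that(2) by simp
    show ?thesis unfolding P_def by (rule measurable_compose[OF measurable_component_singleton[OF iD] that(1)])
  qed
  have Gm[measurable]: "G n \<in> borel_measurable P" for n
    unfolding G_def by (intro borel_measurable_add borel_measurable_const borel_measurable_sum borel_measurable_power compm) auto
  have GGm[measurable]: "GG \<in> borel_measurable P"
    unfolding GG_def by (intro borel_measurable_add borel_measurable_const borel_measurable_sum borel_measurable_power compm) auto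
  have sqYs: "integrable \<Omega> (\<lambda>x. (Ys n x)\<^sup>2)" "(\<integral>x. (Ys n x)\<^sup>2 \<partial>\<Omega>) = 1" for n
  proof -
    have "integrable (distr \<Omega> borel (Ys n)) (\<lambda>z. z\<^sup>2)" unfolding Ysd by (rule nu_second_moment(1)[OF mupos])
    then show "integrable \<Omega> (\<lambda>x. (Ys n x)\<^sup>2)" by (subst (asm) integrable_distr_eq) auto
    have "(\<integral>z. z\<^sup>2 \<partial>distr \<Omega> borel (Ys n)) = 1" unfolding Ysd by (rule nu_second_moment(2)[OF mupos])
    then show "(\<integral>x. (Ys n x)\<^sup>2 \<partial>\<Omega>) = 1" by (subst (asm) integral_distr) auto
  qed
  have sqY: "integrable \<Omega> (\<lambda>x. (Y x)\<^sup>2)" "(\<integral>x. (Y x)\<^sup>2 \<partial>\<Omega>) = 1"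
  proof -
    have "integrable (distr \<Omega> borel Y) (\<lambda>z. z\<^sup>2)" unfolding Yd by (rule std_normal_sq(1))
    then show "integrable \<Omega> (\<lambda>x. (Y x)\<^sup>2)" by (subst (asm) integrable_distr_eq) auto
    have "(\<integral>z. z\<^sup>2 \<partial>distr \<Omega> borel Y) = 1" unfolding Yd by (rule std_normal_sq(2))
    then show "(\<integral>x. (Y x)\<^sup>2 \<partial>\<Omega>) = 1" by (subst (asm) integral_distr) auto
  qed
  have intcomp: "integrable P (\<lambda>\<omega>. (h (\<omega> i))\<^sup>2)" "(\<integral>\<omega>. (h (\<omega> i))\<^sup>2 \<partial>P) = 1"
    if hm: "h \<in> borel_measurable \<Omega>" and hi: "integrable \<Omega> (\<lambda>x. (h x)\<^sup>2)" "(\<integral>x. (h x)\<^sup>2 \<partial>\<Omega>) = 1" and i: "i < D" for h :: "real \<Rightarrow> real" and i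
  proof -
    have hm2: "(\<lambda>x. (h x)\<^sup>2) \<in> borel_measurable \<Omega>" by (intro borel_measurable_power hm)
    show "integrable P (\<lambda>\<omega>. (h (\<omega> i))\<^sup>2)" unfolding P_def using comp_integral(1)[OF \<Omega> i hm2] hi by simp
    show "(\<integral>\<omega>. (h (\<omega> i))\<^sup>2 \<partial>P) = 1" unfolding P_def using comp_integral(2)[OF \<Omega> i hm2] hi by simp
  qed
  have sumint: "integrable P (\<lambda>\<omega>. 1 + (\<Sum>i<D. (h (\<omega> i))\<^sup>2))"
      "(\<integral>\<omega>. 1 + (\<Sum>i<D. (h (\<omega> i))\<^sup>2) \<partial>P) = 1 + real D"
    if hi: "\<And>i. i < D \<Longrightarrow> integrable P (\<lambda>\<omega>. (h (\<omega> i))\<^sup>2)"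
      "\<And>i. i < D \<Longrightarrow> (\<integral>\<omega>. (h (\<omega> i))\<^sup>2 \<partial>P) = 1" for h :: "real \<Rightarrow> real"
  proof -
    have isum: "integrable P (\<lambda>\<omega>. \<Sum>i<D. (h (\<omega> i))\<^sup>2)"
      by (rule Bochner_Integration.integrable_sum) (simp add: hi)
    show "integrable P (\<lambda>\<omega>. 1 + (\<Sum>i<D. (h (\<omega> i))\<^sup>2))"
      by (rule Bochner_Integration.integrable_add[OF P.integrable_const isum])
    have "(\<integral>\<omega>. 1 + (\<Sum>i<D. (h (\<omega> i))\<^sup>2) \<partial>P) = (\<integral>\<omega>. 1 \<partial>P) + (\<integral>\<omega>. (\<Sum>i<D. (h (\<omega> i))\<^sup>2) \<partial>P)"
      by (rule Bochner_Integration.integral_add[OF P.integrable_const isum])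
    also have "(\<integral>\<omega>. (\<Sum>i<D. (h (\<omega> i))\<^sup>2) \<partial>P) = (\<Sum>i<D. (\<integral>\<omega>. (h (\<omega> i))\<^sup>2 \<partial>P))"
      by (rule Bochner_Integration.integral_sum) (simp add: hi)
    also have "\<dots> = (\<Sum>i<D. 1)" by (rule sum.cong) (simp_all add: hi)
    finally show "(\<integral>\<omega>. 1 + (\<Sum>i<D. (h (\<omega> i))\<^sup>2) \<partial>P) = 1 + real D" by (simp add: P.prob_space)
  qed
  have intG: "integrable P (G n)" "integral\<^sup>L P (G n) = 1 + real D" for n
    unfolding G_def by (rule sumint; use intcomp[OF Ysmb sqYs] in auto)+
  have intGG: "integrable P GG" "integral\<^sup>L P GG = 1 + real D"
    unfolding GG_def by (rule sumint; use intcomp[OF Ymb sqY] in auto)+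
  have spaceP: "\<omega> i \<in> space \<Omega>" if "\<omega> \<in> space P" "i < D" for \<omega> i
    using that unfolding P_def by (auto simp: space_PiM)
  have Wconv: "(\<lambda>n. W n \<omega>) \<longlonglongrightarrow> V \<omega>" if "\<omega> \<in> space P" for \<omega>
    unfolding W_def V_def by (rule rth_tendsto[OF r]) (use conv spaceP that in auto)
  have Gconv: "(\<lambda>n. G n \<omega>) \<longlonglongrightarrow> GG \<omega>" if "\<omega> \<in> space P" for \<omega>
    unfolding G_def GG_def by (intro tendsto_intros conv spaceP that) auto
  have W2bnd: "\<bar>(W n \<omega>)\<^sup>2\<bar> \<le> G n \<omega>" for n \<omega>
    using rth_sq_le[OF r, of "\<lambda>i. Ys n (\<omega> i)"] unfolding W_def G_def by simp
  have Wbnd: "\<bar>W n \<omega>\<bar> \<le> G n \<omega>" for n \<omega>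
  proof -
    have "(W n \<omega>)\<^sup>2 \<le> (\<Sum>i<D. (Ys n (\<omega> i))\<^sup>2)"
      using rth_sq_le[OF r, of "\<lambda>i. Ys n (\<omega> i)"] unfolding W_def by simp
    then show ?thesis using abs_le_1_sq[of "W n \<omega>"] unfolding G_def by linarith
  qed
  have m1: "(\<lambda>n. integral\<^sup>L P (W n)) \<longlonglongrightarrow> integral\<^sup>L P V"
    by (rule gen_dct[where g=G and G=GG]) (use intG intGG Wbnd Wconv Gconv in auto)
  have m2: "(\<lambda>n. \<integral>\<omega>. (W n \<omega>)\<^sup>2 \<partial>P) \<longlonglongrightarrow> (\<integral>\<omega>. (V \<omega>)\<^sup>2 \<partial>P)"
    by (rule gen_dct[where g=G and G=GG and f="\<lambda>n \<omega>. (W n \<omega>)\<^sup>2"])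
       (use intG intGG W2bnd Wconv Gconv in \<open>auto intro: tendsto_intros\<close>)
  have W2int: "integrable P (\<lambda>\<omega>. (W n \<omega>)\<^sup>2)" for n
  proof (rule Bochner_Integration.integrable_bound[OF intG(1)[of n]])
    show "AE x in P. norm ((W n x)\<^sup>2) \<le> norm (G n x)"
    proof (rule AE_I2)
      fix x
      show "norm ((W n x)\<^sup>2) \<le> norm (G n x)"
        unfolding real_norm_def using W2bnd[of n x] abs_ge_self[of "G n x"] by linarith
    qed
  qed simp
  have V2bnd: "(V \<omega>)\<^sup>2 \<le> GG \<omega>" for \<omega>
    using rth_sq_le[OF r, of "\<lambda>i. Y (\<omega> i)"] unfolding V_def GG_def by simp
  have V2int: "integrable P (\<lambda>\<omega>. (V \<omega>)\<^sup>2)"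
  proof (rule Bochner_Integration.integrable_bound[OF intGG(1)])
    show "AE x in P. norm ((V x)\<^sup>2) \<le> norm (GG x)"
    proof (rule AE_I2)
      fix x
      have "\<bar>(V x)\<^sup>2\<bar> = (V x)\<^sup>2" by simp
      then show "norm ((V x)\<^sup>2) \<le> norm (GG x)"
        unfolding real_norm_def using V2bnd[of x] abs_ge_self[of "GG x"] by linarith
    qed
  qed simp
  have repP: "order_stat (pois_law (mu n)) D r = distr P borel (\<lambda>\<omega>. mu n + sqrt (mu n) * W n \<omega>)" for n
  proof -
    have "order_stat (pois_law (mu n)) D r = distr P borel (\<lambda>\<omega>. rth_smallest D r (\<lambda>i. mu n + sqrt (mu n) * Ys n (\<omega> i)))"
      unfolding pois_repr[OF mupos Ysmb Ysd] P_def by (rule order_stat_repr[OF \<Omega> _ r]) simp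
    also have "\<dots> = distr P borel (\<lambda>\<omega>. mu n + sqrt (mu n) * W n \<omega>)"
      unfolding W_def using mupos[of n] by (simp add: rth_affine[OF r])
    finally show ?thesis .
  qed
  have repN: "order_stat std_normal_law D r = distr P borel (\<lambda>\<omega>. 0 + 1 * V \<omega>)"
    unfolding std_normal_law_def Yd[symmetric] P_def V_def by (simp add: order_stat_repr[OF \<Omega> Ymb r])
  have mW: "mean_of (order_stat (pois_law (mu n)) D r) = mu n + sqrt (mu n) * integral\<^sup>L P (W n)" for n
    unfolding repP by (rule moments_affine(2)[OF P Wm W2int])
  have vW: "var_of (order_stat (pois_law (mu n)) D r) = mu n * ((\<integral>\<omega>. (W n \<omega>)\<^sup>2 \<partial>P) - (integral\<^sup>L P (W n))\<^sup>2)" for n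
    unfolding repP moments_affine(3)[OF P Wm W2int] using mupos[of n] by simp
  have vV: "var_of (order_stat std_normal_law D r) = (\<integral>\<omega>. (V \<omega>)\<^sup>2 \<partial>P) - (integral\<^sup>L P V)\<^sup>2"
    unfolding repN moments_affine(3)[OF P Vm V2int] by simp
  have disp: "dispersion (order_stat (pois_law (mu n)) D r)
      = ((\<integral>\<omega>. (W n \<omega>)\<^sup>2 \<partial>P) - (integral\<^sup>L P (W n))\<^sup>2) / (1 + integral\<^sup>L P (W n) * inverse (sqrt (mu n)))" for n
  proof -
    have sq: "sqrt (mu n) > 0" using mupos[of n] by simp
    have "mu n + sqrt (mu n) * integral\<^sup>L P (W n) = mu n * (1 + integral\<^sup>L P (W n) * inverse (sqrt (mu n)))"
      using sq mupos[of n] by (simp add: field_simps)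
    then show ?thesis unfolding dispersion_def mW vW using mupos[of n] by simp
  qed
  have inv0: "(\<lambda>n. inverse (sqrt (mu n))) \<longlonglongrightarrow> 0"
    by (rule tendsto_inverse_0_at_top[OF filterlim_compose[OF sqrt_at_top mulim]])
  have "(\<lambda>n. ((\<integral>\<omega>. (W n \<omega>)\<^sup>2 \<partial>P) - (integral\<^sup>L P (W n))\<^sup>2) / (1 + integral\<^sup>L P (W n) * inverse (sqrt (mu n))))
      \<longlonglongrightarrow> ((\<integral>\<omega>. (V \<omega>)\<^sup>2 \<partial>P) - (integral\<^sup>L P V)\<^sup>2) / (1 + integral\<^sup>L P V * 0)"
    by (intro tendsto_intros m1 m2 inv0) simp
  then show ?thesis unfolding disp vV by simp
qed


theorem mainTheorem1:
  fixes D r :: nat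
  assumes "1 \<le> r" and "r \<le> D"
  shows "((\<lambda>mu. dispersion (order_stat (pois_law mu) D r))
           \<longlongrightarrow> var_of (order_stat std_normal_law D r)) at_top"
proof (rule tendsto_at_topI_sequentially)
  fix X :: "nat \<Rightarrow> real"
  assume X: "filterlim X at_top sequentially"
  define mu where "mu n = max (X n) 1" for n
  have mu1: "1 \<le> mu n" for n unfolding mu_def by simp
  have mulim: "filterlim mu at_top sequentially"
    by (rule filterlim_at_top_mono[OF X]) (simp add: mu_def)
  have k: "(\<lambda>n. dispersion (order_stat (pois_law (mu n)) D r)) \<longlonglongrightarrow> var_of (order_stat std_normal_law D r)"
    by (rule key[OF assms mu1 mulim])
  have ev: "eventually (\<lambda>n. 1 \<le> X n) sequentially"
    using X unfolding filterlim_at_top by blast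
  have ev2: "eventually (\<lambda>n. dispersion (order_stat (pois_law (mu n)) D r) = dispersion (order_stat (pois_law (X n)) D r)) sequentially"
    using ev by (rule eventually_mono) (simp add: mu_def)
  show "(\<lambda>n. dispersion (order_stat (pois_law (X n)) D r)) \<longlonglongrightarrow> var_of (order_stat std_normal_law D r)"
    by (rule Lim_transform_eventually[OF k ev2])
qed

end
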